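(* Let $\mathcal V$ be a congruence modular variety with difference term $d$, $A\in\mathcal V$ and $\alpha\in\operatorname{Con}A$ (arbitrary). Let $B=A(\alpha)/\Delta_{\alpha1}$ with binary operation $x+y:=d^B(x,0,y)$, where $0$ is the $\Delta_{\alpha1}$-class containing the diagonal. Then there exist maps $T_f:(A/\alpha)^{\operatorname{ar}f}\to B$ ($f\in\tau$) such that \[A/[\alpha,1_A]\cong B\otimes^{T}A/\alpha.\]
   Context: All algebras are in the sense of universal algebra, with signature $\tau$. For $\alpha,\beta\in\operatorname{Con}A$, $[\alpha,\beta]$ is the term-condition (TC) commutator; $1_A$ is the total relation. $A(\alpha)=\{(x,y)\in A\times A:(x,y)\in\alpha\}$ is $\alpha$ viewed as a subalgebra of $A\times A$; $\Delta_{\alpha\beta}$ is the congruence of $A(\alpha)$ generated by $\{((u,u),(v,v)):(u,v)\in\beta\}$. A difference term for $\mathcal V$ is a ternary term $d$ such that for every $A\in\mathcal V$, $\theta\in\operatorname{Con}A$, $(a,b)\in\theta$: $d(a,a,b)=b$ and $(d(a,b,b),a)\in[\theta,\theta]$ (every congruence modular variety has one). Given algebras $B,Q$ in the same signature $\tau$, a binary operation $+$ on $B$, and maps $T_f:Q^{\operatorname{ar}f}\to B$ ($f\in\tau$), the algebra $B\otimes^{T}Q$ has universe $B\times Q$ and operations $F_f((b_1,q_1),\dots,(b_n,q_n))=\big(f^B(b_1,\dots,b_n)+T_f(q_1,\dots,q_n),\,f^Q(q_1,\dots,q_n)\big)$. *)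

theory Defs
  imports Main
begin

text \<open>An algebra is a nonempty carrier A together with an interpretation F of the symbols
  (F f is only meaningful on lists of length ar f with entries in A).\<close>

datatype ('f, 'v) trm = Var 'v | Op 'f "('f, 'v) trm list"

fun eval :: "('f \<Rightarrow> 'a list \<Rightarrow> 'a) \<Rightarrow> ('v \<Rightarrow> 'a) \<Rightarrow> ('f, 'v) trm \<Rightarrow> 'a" where
  "eval F \<sigma> (Var v) = \<sigma> v"
| "eval F \<sigma> (Op f ts) = F f (map (eval F \<sigma>) ts)"

fun wf_trm :: "('f \<Rightarrow> nat) \<Rightarrow> ('f, 'v) trm \<Rightarrow> bool" where
  "wf_trm ar (Var v) = True"
| "wf_trm ar (Op f ts) = (length ts = ar f \<and> (\<forall>t\<in>set ts. wf_trm ar t))"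

definition is_alg :: "('f \<Rightarrow> nat) \<Rightarrow> 'a set \<Rightarrow> ('f \<Rightarrow> 'a list \<Rightarrow> 'a) \<Rightarrow> bool" where
  "is_alg ar A F \<equiv> A \<noteq> {} \<and> (\<forall>f xs. length xs = ar f \<and> set xs \<subseteq> A \<longrightarrow> F f xs \<in> A)"

definition sat_id :: "'a set \<Rightarrow> ('f \<Rightarrow> 'a list \<Rightarrow> 'a) \<Rightarrow> ('f, nat) trm \<Rightarrow> ('f, nat) trm \<Rightarrow> bool" where
  "sat_id A F s t \<equiv> \<forall>\<sigma>. range \<sigma> \<subseteq> A \<longrightarrow> eval F \<sigma> s = eval F \<sigma> t"

definition is_model :: "('f \<Rightarrow> nat) \<Rightarrow> (('f, nat) trm \<times> ('f, nat) trm) set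
    \<Rightarrow> 'a set \<Rightarrow> ('f \<Rightarrow> 'a list \<Rightarrow> 'a) \<Rightarrow> bool" where
  "is_model ar Eqs A F \<equiv> is_alg ar A F \<and> (\<forall>(s, t) \<in> Eqs. sat_id A F s t)"

definition is_con :: "('f \<Rightarrow> nat) \<Rightarrow> 'a set \<Rightarrow> ('f \<Rightarrow> 'a list \<Rightarrow> 'a) \<Rightarrow> 'a rel \<Rightarrow> bool" where
  "is_con ar A F \<theta> \<equiv> \<theta> \<subseteq> A \<times> A \<and> (\<forall>x\<in>A. (x, x) \<in> \<theta>) \<and> sym \<theta> \<and> trans \<theta> \<and>
     (\<forall>f xs ys. length xs = ar f \<and> length ys = ar f \<and> list_all2 (\<lambda>x y. (x, y) \<in> \<theta>) xs ys
        \<longrightarrow> (F f xs, F f ys) \<in> \<theta>)"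

definition Cg :: "('f \<Rightarrow> nat) \<Rightarrow> 'a set \<Rightarrow> ('f \<Rightarrow> 'a list \<Rightarrow> 'a) \<Rightarrow> 'a rel \<Rightarrow> 'a rel" where
  "Cg ar A F R \<equiv> \<Inter>{\<theta>. is_con ar A F \<theta> \<and> R \<subseteq> \<theta>}"

definition con_join :: "('f \<Rightarrow> nat) \<Rightarrow> 'a set \<Rightarrow> ('f \<Rightarrow> 'a list \<Rightarrow> 'a) \<Rightarrow> 'a rel \<Rightarrow> 'a rel \<Rightarrow> 'a rel" where
  "con_join ar A F \<theta> \<psi> \<equiv> Cg ar A F (\<theta> \<union> \<psi>)"

definition modular_con :: "('f \<Rightarrow> nat) \<Rightarrow> 'a set \<Rightarrow> ('f \<Rightarrow> 'a list \<Rightarrow> 'a) \<Rightarrow> bool" where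
  "modular_con ar A F \<equiv> \<forall>\<alpha> \<beta> \<gamma>. is_con ar A F \<alpha> \<and> is_con ar A F \<beta> \<and> is_con ar A F \<gamma> \<and> \<alpha> \<subseteq> \<gamma>
      \<longrightarrow> con_join ar A F \<alpha> \<beta> \<inter> \<gamma> = con_join ar A F \<alpha> (\<beta> \<inter> \<gamma>)"

text \<open>Term condition C(alpha, beta; delta): for every term t(x,y) (variables Inl i are the x's,
  Inr j the y's), a alpha b componentwise and c beta d componentwise:
  t(a,c) delta t(a,d) implies t(b,c) delta t(b,d).\<close>
definition term_cond :: "('f \<Rightarrow> nat) \<Rightarrow> ('f \<Rightarrow> 'a list \<Rightarrow> 'a) \<Rightarrow> 'a rel \<Rightarrow> 'a rel \<Rightarrow> 'a rel \<Rightarrow> bool" where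
  "term_cond ar F \<alpha> \<beta> \<delta> \<equiv> \<forall>(t :: ('f, nat + nat) trm) a b c d.
      wf_trm ar t \<and> (\<forall>i. (a i, b i) \<in> \<alpha>) \<and> (\<forall>j. (c j, d j) \<in> \<beta>) \<and>
      (eval F (case_sum a c) t, eval F (case_sum a d) t) \<in> \<delta>
      \<longrightarrow> (eval F (case_sum b c) t, eval F (case_sum b d) t) \<in> \<delta>"

definition commutator :: "('f \<Rightarrow> nat) \<Rightarrow> 'a set \<Rightarrow> ('f \<Rightarrow> 'a list \<Rightarrow> 'a) \<Rightarrow> 'a rel \<Rightarrow> 'a rel \<Rightarrow> 'a rel" where
  "commutator ar A F \<alpha> \<beta> \<equiv> \<Inter>{\<delta>. is_con ar A F \<delta> \<and> term_cond ar F \<alpha> \<beta> \<delta>}"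

definition app3 :: "('f \<Rightarrow> 'a list \<Rightarrow> 'a) \<Rightarrow> ('f, nat) trm \<Rightarrow> 'a \<Rightarrow> 'a \<Rightarrow> 'a \<Rightarrow> 'a" where
  "app3 F d x y z \<equiv> eval F (\<lambda>i. if i = 0 then x else if i = 1 then y else z) d"

text \<open>The variety Mod(Eqs) is congruence modular -- restricted to algebras whose carrier lives
  in the type 'b (HOL cannot quantify over types inside a formula).\<close>
definition cm_at :: "('f \<Rightarrow> nat) \<Rightarrow> (('f, nat) trm \<times> ('f, nat) trm) set \<Rightarrow> 'b itself \<Rightarrow> bool" where
  "cm_at ar Eqs (T :: 'b itself) \<equiv>
     \<forall>(B :: 'b set) G. is_model ar Eqs B G \<longrightarrow> modular_con ar B G"

definition diff_term_at :: "('f \<Rightarrow> nat) \<Rightarrow> (('f, nat) trm \<times> ('f, nat) trm) set \<Rightarrow> ('f, nat) trm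
    \<Rightarrow> 'b itself \<Rightarrow> bool" where
  "diff_term_at ar Eqs d (T :: 'b itself) \<equiv>
     \<forall>(B :: 'b set) G \<theta> a b. is_model ar Eqs B G \<and> is_con ar B G \<theta> \<and> (a, b) \<in> \<theta> \<longrightarrow>
        app3 G d a a b = b \<and> (app3 G d a b b, a) \<in> commutator ar B G \<theta> \<theta>"

text \<open>Operations of A(alpha) (carrier alpha, a subalgebra of A x A).\<close>
definition pair_ops :: "('f \<Rightarrow> 'a list \<Rightarrow> 'a) \<Rightarrow> 'f \<Rightarrow> ('a \<times> 'a) list \<Rightarrow> 'a \<times> 'a" where
  "pair_ops F f ps \<equiv> (F f (map fst ps), F f (map snd ps))"

definition quot_ops :: "('f \<Rightarrow> 'a list \<Rightarrow> 'a) \<Rightarrow> 'a rel \<Rightarrow> 'f \<Rightarrow> 'a set list \<Rightarrow> 'a set" where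
  "quot_ops F \<theta> f Xs \<equiv> \<theta> `` {F f (map (\<lambda>X. SOME x. x \<in> X) Xs)}"

definition Delta1 :: "('f \<Rightarrow> nat) \<Rightarrow> 'a set \<Rightarrow> ('f \<Rightarrow> 'a list \<Rightarrow> 'a) \<Rightarrow> 'a rel \<Rightarrow> ('a \<times> 'a) rel" where
  "Delta1 ar A F \<alpha> \<equiv> Cg ar \<alpha> (pair_ops F) {((u, u), (v, v)) | u v. (u, v) \<in> A \<times> A}"

definition diag_class :: "'a set \<Rightarrow> 'a rel \<Rightarrow> ('a \<times> 'a) rel \<Rightarrow> ('a \<times> 'a) set" where
  "diag_class A \<alpha> \<Delta> \<equiv> THE X. X \<in> \<alpha> // \<Delta> \<and> (\<forall>u\<in>A. (u, u) \<in> X)"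

definition tensor_ops :: "('f \<Rightarrow> 'b list \<Rightarrow> 'b) \<Rightarrow> ('b \<Rightarrow> 'b \<Rightarrow> 'b) \<Rightarrow> ('f \<Rightarrow> 'q list \<Rightarrow> 'b)
    \<Rightarrow> ('f \<Rightarrow> 'q list \<Rightarrow> 'q) \<Rightarrow> 'f \<Rightarrow> ('b \<times> 'q) list \<Rightarrow> 'b \<times> 'q" where
  "tensor_ops FB pl T FQ f ps \<equiv>
     (pl (FB f (map fst ps)) (T f (map snd ps)), FQ f (map snd ps))"

definition iso :: "('f \<Rightarrow> nat) \<Rightarrow> 'a set \<Rightarrow> ('f \<Rightarrow> 'a list \<Rightarrow> 'a) \<Rightarrow> 'b set \<Rightarrow> ('f \<Rightarrow> 'b list \<Rightarrow> 'b) \<Rightarrow> bool" where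
  "iso ar A F B G \<equiv> \<exists>h. bij_betw h A B \<and>
     (\<forall>f xs. length xs = ar f \<and> set xs \<subseteq> A \<longrightarrow> h (F f xs) = G f (map h xs))"

end

theory Submission
  imports Defs
begin


lemma con_sub: "is_con ar A F \<theta> \<Longrightarrow> (x,y) \<in> \<theta> \<Longrightarrow> x \<in> A \<and> y \<in> A"
  unfolding is_con_def by blast
lemma con_refl: "is_con ar A F \<theta> \<Longrightarrow> x \<in> A \<Longrightarrow> (x,x) \<in> \<theta>"
  unfolding is_con_def by blast
lemma con_sym: "is_con ar A F \<theta> \<Longrightarrow> (x,y) \<in> \<theta> \<Longrightarrow> (y,x) \<in> \<theta>"
  unfolding is_con_def sym_def by blast
lemma con_trans: "is_con ar A F \<theta> \<Longrightarrow> (x,y) \<in> \<theta> \<Longrightarrow> (y,z) \<in> \<theta> \<Longrightarrow> (x,z) \<in> \<theta>"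
  unfolding is_con_def trans_def by blast
lemma con_compat: "is_con ar A F \<theta> \<Longrightarrow> length xs = ar f \<Longrightarrow> length ys = ar f \<Longrightarrow>
   (\<forall>i<ar f. (xs!i, ys!i) \<in> \<theta>) \<Longrightarrow> (F f xs, F f ys) \<in> \<theta>"
  unfolding is_con_def by (auto simp: list_all2_conv_all_nth)
lemma con_class: "is_con ar A F \<theta> \<Longrightarrow> (x,y) \<in> \<theta> \<Longrightarrow> \<theta>``{x} = \<theta>``{y}"
  unfolding is_con_def sym_def trans_def by blast
lemma con_class_iff: "is_con ar A F \<theta> \<Longrightarrow> x \<in> A \<Longrightarrow> \<theta>``{x} = \<theta>``{y} \<Longrightarrow> (y,x) \<in> \<theta>"
  by (metis Image_singleton_iff con_refl)

lemma con_inter: assumes "is_con ar A F a" "is_con ar A F b" shows "is_con ar A F (a \<inter> b)"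
  unfolding is_con_def
proof (intro conjI allI impI ballI)
  show "a \<inter> b \<subseteq> A \<times> A" by (auto dest: con_sub[OF assms(1)])
  show "\<And>x. x \<in> A \<Longrightarrow> (x, x) \<in> a \<inter> b" using con_refl[OF assms(1)] con_refl[OF assms(2)] by blast
  show "sym (a \<inter> b)" unfolding sym_def using con_sym[OF assms(1)] con_sym[OF assms(2)] by blast
  show "trans (a \<inter> b)" unfolding trans_def using con_trans[OF assms(1)] con_trans[OF assms(2)] by blast
  fix f xs ys assume h: "length xs = ar f \<and> length ys = ar f \<and> list_all2 (\<lambda>x y. (x, y) \<in> a \<inter> b) xs ys"
  have "(F f xs, F f ys) \<in> a" using h by (intro con_compat[OF assms(1)]) (auto simp: list_all2_conv_all_nth)
  moreover have "(F f xs, F f ys) \<in> b" using h by (intro con_compat[OF assms(2)]) (auto simp: list_all2_conv_all_nth)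
  ultimately show "(F f xs, F f ys) \<in> a \<inter> b" by blast
qed

lemma alg_op: "is_alg ar A F \<Longrightarrow> length xs = ar f \<Longrightarrow> set xs \<subseteq> A \<Longrightarrow> F f xs \<in> A"
  unfolding is_alg_def by blast

lemma total_con: "is_alg ar A F \<Longrightarrow> is_con ar A F (A \<times> A)"
  unfolding is_con_def sym_def trans_def is_alg_def
  by (auto simp: list_all2_conv_all_nth) (metis in_set_conv_nth subsetI)+

lemma eval_in: "is_alg ar A F \<Longrightarrow> wf_trm ar t \<Longrightarrow> (\<forall>v. \<sigma> v \<in> A) \<Longrightarrow> eval F \<sigma> t \<in> A"
proof (induction t)
  case (Var x) then show ?case by simp
next
  case (Op f ts)
  have "set (map (eval F \<sigma>) ts) \<subseteq> A" using Op.IH Op.prems by auto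
  then show ?case using Op.prems by (simp add: alg_op[OF Op.prems(1)])
qed

lemma eval_con: "is_con ar A F \<theta> \<Longrightarrow> wf_trm ar t \<Longrightarrow> (\<forall>v. (\<sigma> v, \<tau> v) \<in> \<theta>) \<Longrightarrow>
   (eval F \<sigma> t, eval F \<tau> t) \<in> \<theta>"
proof (induction t)
  case (Var x) then show ?case by simp
next
  case (Op f ts)
  have "\<forall>i<ar f. (map (eval F \<sigma>) ts ! i, map (eval F \<tau>) ts ! i) \<in> \<theta>"
    using Op.IH Op.prems by (auto simp: nth_mem)
  then show ?case using Op.prems by (simp add: con_compat[OF Op.prems(1)])
qed

fun subst :: "('v \<Rightarrow> ('f,'w) trm) \<Rightarrow> ('f,'v) trm \<Rightarrow> ('f,'w) trm" where
  "subst s (Var v) = s v"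
| "subst s (Op f ts) = Op f (map (subst s) ts)"

lemma eval_subst: "eval F \<sigma> (subst s t) = eval F (\<lambda>v. eval F \<sigma> (s v)) t"
  by (induction t) (simp_all add: comp_def cong: map_cong)

lemma wf_subst: "wf_trm ar t \<Longrightarrow> (\<forall>v. wf_trm ar (s v)) \<Longrightarrow> wf_trm ar (subst s t)"
  by (induction t) auto

lemma eval_pair: "eval (pair_ops F) \<sigma> t = (eval F (fst \<circ> \<sigma>) t, eval F (snd \<circ> \<sigma>) t)"
proof (induction t)
  case (Var x) then show ?case by simp
next
  case (Op f ts)
  have 1: "map fst (map (eval (pair_ops F) \<sigma>) ts) = map (eval F (fst \<circ> \<sigma>)) ts"
    using Op by (auto simp: comp_def)
  have 2: "map snd (map (eval (pair_ops F) \<sigma>) ts) = map (eval F (snd \<circ> \<sigma>)) ts"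
    using Op by (auto simp: comp_def)
  show ?case using Op by (simp add: pair_ops_def comp_def cong: map_cong)
qed

lemma app3_pair: "app3 (pair_ops F) d (x1,x2) (y1,y2) (z1,z2) = (app3 F d x1 y1 z1, app3 F d x2 y2 z2)"
proof -
  have a: "fst \<circ> (\<lambda>i. if i = 0 then (x1,x2) else if i = 1 then (y1,y2) else (z1,z2)) =
     (\<lambda>i. if i = 0 then x1 else if i = 1 then y1 else z1)" by auto
  have b: "snd \<circ> (\<lambda>i. if i = 0 then (x1,x2) else if i = 1 then (y1,y2) else (z1,z2)) =
     (\<lambda>i. if i = 0 then x2 else if i = 1 then y2 else z2)" by auto
  show ?thesis unfolding app3_def eval_pair a b ..
qed

lemma app3_in: "is_alg ar A F \<Longrightarrow> wf_trm ar d \<Longrightarrow> x \<in> A \<Longrightarrow> y \<in> A \<Longrightarrow> z \<in> A \<Longrightarrow> app3 F d x y z \<in> A"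
  unfolding app3_def by (rule eval_in) auto

lemma app3_con: "is_con ar A F \<theta> \<Longrightarrow> wf_trm ar d \<Longrightarrow> (x,x') \<in> \<theta> \<Longrightarrow> (y,y') \<in> \<theta> \<Longrightarrow> (z,z') \<in> \<theta> \<Longrightarrow>
   (app3 F d x y z, app3 F d x' y' z') \<in> \<theta>"
  unfolding app3_def by (rule eval_con) auto

lemma quot_ops_classes: assumes "is_con ar A F \<theta>" "length xs = ar f" "set xs \<subseteq> A"
  shows "quot_ops F \<theta> f (map (\<lambda>x. \<theta>``{x}) xs) = \<theta>``{F f xs}"
proof -
  have "\<forall>i<ar f. (xs!i, (\<lambda>X. SOME x. x \<in> X) (\<theta>``{xs!i})) \<in> \<theta>"
  proof (intro allI impI)
    fix i assume "i < ar f"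
    then have "xs!i \<in> A" using assms by auto
    then have "xs!i \<in> \<theta>``{xs!i}" using con_refl[OF assms(1)] by auto
    then show "(xs!i, (\<lambda>X. SOME x. x \<in> X) (\<theta>``{xs!i})) \<in> \<theta>" by (metis Image_singleton_iff someI)
  qed
  then have "(F f xs, F f (map (\<lambda>X. SOME x. x \<in> X) (map (\<lambda>x. \<theta>``{x}) xs))) \<in> \<theta>"
    using assms by (intro con_compat[OF assms(1)]) auto
  then show ?thesis unfolding quot_ops_def using con_class[OF assms(1)] by metis
qed


lemma eval_quot: assumes "is_alg ar A F" "is_con ar A F \<theta>" "wf_trm ar t" "\<forall>v. \<sigma> v \<in> A"
  shows "eval (quot_ops F \<theta>) (\<lambda>v. \<theta>``{\<sigma> v}) t = \<theta>``{eval F \<sigma> t}"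
  using assms(3)
proof (induction t)
  case (Var x) then show ?case by simp
next
  case (Op f ts)
  have eq: "map (eval (quot_ops F \<theta>) (\<lambda>v. \<theta>``{\<sigma> v})) ts = map (\<lambda>x. \<theta>``{x}) (map (eval F \<sigma>) ts)"
    using Op by auto
  have st: "set (map (eval F \<sigma>) ts) \<subseteq> A"
    using Op.prems assms(4) eval_in[OF assms(1)] by auto
  have "eval (quot_ops F \<theta>) (\<lambda>v. \<theta>``{\<sigma> v}) (Op f ts) = quot_ops F \<theta> f (map (\<lambda>x. \<theta>``{x}) (map (eval F \<sigma>) ts))"
    by (simp only: eval.simps eq)
  also have "\<dots> = \<theta>``{F f (map (eval F \<sigma>) ts)}"
    by (rule quot_ops_classes[OF assms(2)]) (use Op.prems st in auto)
  finally show ?case by simp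
qed

lemma app3_quot: assumes "is_alg ar A F" "is_con ar A F \<theta>" "wf_trm ar d" "x \<in> A" "y \<in> A" "z \<in> A"
  shows "app3 (quot_ops F \<theta>) d (\<theta>``{x}) (\<theta>``{y}) (\<theta>``{z}) = \<theta>``{app3 F d x y z}"
proof -
  have fe: "(\<lambda>i. if i = 0 then \<theta>``{x} else if i = 1 then \<theta>``{y} else \<theta>``{z}) =
        (\<lambda>i. \<theta>``{(if i = 0 then x else if i = 1 then y else z)})" by (rule ext) simp
  have e1: "\<forall>v. (if v = 0 then x else if v = 1 then y else z) \<in> A" using assms by simp
  show ?thesis unfolding app3_def fe by (rule eval_quot[OF assms(1,2,3) e1])
qed

lemma is_conI:
  assumes "\<theta> \<subseteq> A \<times> A" "\<And>x. x \<in> A \<Longrightarrow> (x,x) \<in> \<theta>" "\<And>x y. (x,y) \<in> \<theta> \<Longrightarrow> (y,x) \<in> \<theta>"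
    "\<And>x y z. (x,y) \<in> \<theta> \<Longrightarrow> (y,z) \<in> \<theta> \<Longrightarrow> (x,z) \<in> \<theta>"
    "\<And>f xs ys. length xs = ar f \<Longrightarrow> length ys = ar f \<Longrightarrow> (\<forall>i<ar f. (xs!i, ys!i) \<in> \<theta>) \<Longrightarrow> (F f xs, F f ys) \<in> \<theta>"
  shows "is_con ar A F \<theta>"
  unfolding is_con_def sym_def trans_def list_all2_conv_all_nth
  apply (intro conjI)
  apply (fact assms(1))
  apply (simp add: assms(2))
  apply (blast intro: assms(3))
  apply (blast intro: assms(4))
  by (simp add: assms(5))

lemma con_sub': "is_con ar A F \<theta> \<Longrightarrow> \<theta> \<subseteq> A \<times> A" unfolding is_con_def by blast

lemma Inter_con: assumes "S \<noteq> {}" "\<forall>\<theta>\<in>S. is_con ar A F \<theta>" shows "is_con ar A F (\<Inter>S)"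
proof (rule is_conI)
  obtain \<theta>0 where t0: "\<theta>0 \<in> S" using assms(1) by blast
  then have "\<Inter>S \<subseteq> \<theta>0" by (rule Inter_lower)
  also have "\<theta>0 \<subseteq> A \<times> A" using con_sub'[of ar A F \<theta>0] assms(2) t0 by blast
  finally show "\<Inter>S \<subseteq> A \<times> A" .
  show "\<And>x. x \<in> A \<Longrightarrow> (x, x) \<in> \<Inter> S"
  proof -
    fix x assume "x \<in> A" then show "(x, x) \<in> \<Inter> S"
      using assms(2) by (simp add: con_refl[of ar A F _ x])
  qed
  show "\<And>x y. (x, y) \<in> \<Inter> S \<Longrightarrow> (y, x) \<in> \<Inter> S"
  proof -
    fix x y assume "(x, y) \<in> \<Inter> S" then show "(y, x) \<in> \<Inter> S"
      using assms(2) by (simp add: con_sym[of ar A F _ x y])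
  qed
  show "\<And>x y z. (x, y) \<in> \<Inter> S \<Longrightarrow> (y, z) \<in> \<Inter> S \<Longrightarrow> (x, z) \<in> \<Inter> S"
  proof -
    fix x y z assume "(x, y) \<in> \<Inter> S" "(y, z) \<in> \<Inter> S" then show "(x, z) \<in> \<Inter> S"
      using assms(2) by (simp add: con_trans[of ar A F _ x y z])
  qed
  show "\<And>f xs ys. length xs = ar f \<Longrightarrow> length ys = ar f \<Longrightarrow> \<forall>i<ar f. (xs ! i, ys ! i) \<in> \<Inter> S \<Longrightarrow> (F f xs, F f ys) \<in> \<Inter> S"
  proof -
    fix f xs ys assume h: "length xs = ar f" "length ys = ar f" "\<forall>i<ar f. (xs ! i, ys ! i) \<in> \<Inter> S"
    show "(F f xs, F f ys) \<in> \<Inter> S"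
    proof
      fix \<theta> assume "\<theta> \<in> S"
      then show "(F f xs, F f ys) \<in> \<theta>" using h assms(2) con_compat[of ar A F \<theta> xs f ys] by blast
    qed
  qed
qed

lemma Cg_con: assumes "is_alg ar A F" "R \<subseteq> A \<times> A" shows "is_con ar A F (Cg ar A F R)"
proof -
  have ne: "A \<times> A \<in> {\<theta>. is_con ar A F \<theta> \<and> R \<subseteq> \<theta>}" using total_con[OF assms(1)] assms(2) by auto
  show ?thesis unfolding Cg_def by (rule Inter_con) (use ne in auto)
qed

lemma Cg_gen: "R \<subseteq> Cg ar A F R" unfolding Cg_def by blast
lemma Cg_least: "is_con ar A F \<theta> \<Longrightarrow> R \<subseteq> \<theta> \<Longrightarrow> Cg ar A F R \<subseteq> \<theta>" unfolding Cg_def by blast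

lemma tc_total: assumes "is_alg ar A F" "\<alpha> \<subseteq> A \<times> A" "\<beta> \<subseteq> A \<times> A"
  shows "term_cond ar F \<alpha> \<beta> (A \<times> A)"
  unfolding term_cond_def
proof (intro allI impI)
  fix t :: "('a, nat + nat) trm" and a b c d :: "nat \<Rightarrow> 'b"
  assume h: "wf_trm ar t \<and> (\<forall>i. (a i, b i) \<in> \<alpha>) \<and> (\<forall>j. (c j, d j) \<in> \<beta>) \<and>
       (eval F (case_sum a c) t, eval F (case_sum a d) t) \<in> A \<times> A"
  have "\<forall>v. case_sum b c v \<in> A" "\<forall>v. case_sum b d v \<in> A" using h assms by (auto split: sum.split)
  then show "(eval F (case_sum b c) t, eval F (case_sum b d) t) \<in> A \<times> A"
    using h eval_in[OF assms(1)] by auto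
qed

lemma comm_con: assumes "is_alg ar A F" "\<alpha> \<subseteq> A \<times> A" "\<beta> \<subseteq> A \<times> A"
  shows "is_con ar A F (commutator ar A F \<alpha> \<beta>)"
proof -
  have ne: "A \<times> A \<in> {\<delta>. is_con ar A F \<delta> \<and> term_cond ar F \<alpha> \<beta> \<delta>}"
    using total_con[OF assms(1)] tc_total[OF assms] by auto
  show ?thesis unfolding commutator_def by (rule Inter_con) (use ne in auto)
qed

lemma comm_least: "is_con ar A F \<delta> \<Longrightarrow> term_cond ar F \<alpha> \<beta> \<delta> \<Longrightarrow> commutator ar A F \<alpha> \<beta> \<subseteq> \<delta>"
  unfolding commutator_def by blast

lemma comm_tc: "term_cond ar F \<alpha> \<beta> (commutator ar A F \<alpha> \<beta>)"
  unfolding term_cond_def commutator_def by blast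

lemma tc_mono: "term_cond ar F \<alpha> \<beta> \<delta> \<Longrightarrow> \<beta>' \<subseteq> \<beta> \<Longrightarrow> term_cond ar F \<alpha> \<beta>' \<delta>"
  unfolding term_cond_def by blast

lemma comm_mono: assumes "is_alg ar A F" "\<alpha> \<subseteq> A \<times> A" "\<beta>' \<subseteq> \<beta>" "\<beta> \<subseteq> A \<times> A"
  shows "commutator ar A F \<alpha> \<beta>' \<subseteq> commutator ar A F \<alpha> \<beta>"
  using assms by (intro comm_least comm_con tc_mono[OF comm_tc]) auto

lemma tc_self: assumes "is_con ar A F \<alpha>" "\<beta> \<subseteq> A \<times> A" shows "term_cond ar F \<alpha> \<beta> \<alpha>"
  unfolding term_cond_def
proof (intro allI impI)
  fix t :: "('a, nat + nat) trm" and a b c d :: "nat \<Rightarrow> 'b"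
  assume h: "wf_trm ar t \<and> (\<forall>i. (a i, b i) \<in> \<alpha>) \<and> (\<forall>j. (c j, d j) \<in> \<beta>) \<and>
       (eval F (case_sum a c) t, eval F (case_sum a d) t) \<in> \<alpha>"
  have cA: "c j \<in> A" "d j \<in> A" for j using h assms(2) by auto
  have s1: "\<forall>v. (case_sum b c v, case_sum a c v) \<in> \<alpha>"
  proof
    fix v show "(case_sum b c v, case_sum a c v) \<in> \<alpha>"
      by (cases v) (use h cA con_sym[OF assms(1)] con_refl[OF assms(1)] in auto)
  qed
  have s2: "\<forall>v. (case_sum a d v, case_sum b d v) \<in> \<alpha>"
  proof
    fix v show "(case_sum a d v, case_sum b d v) \<in> \<alpha>"
      by (cases v) (use h cA con_refl[OF assms(1)] in auto)
  qed
  have 1: "(eval F (case_sum b c) t, eval F (case_sum a c) t) \<in> \<alpha>"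
    using h s1 by (intro eval_con[OF assms(1)]) auto
  have 2: "(eval F (case_sum a d) t, eval F (case_sum b d) t) \<in> \<alpha>"
    using h s2 by (intro eval_con[OF assms(1)]) auto
  show "(eval F (case_sum b c) t, eval F (case_sum b d) t) \<in> \<alpha>"
    using 1 2 h con_trans[OF assms(1)] by blast
qed





lemma mod_shift:
  assumes alg: "is_alg ar P G" and m: "modular_con ar P G" and e: "is_con ar P G e" and e': "is_con ar P G e'"
    and D: "is_con ar P G D" and ee: "e \<inter> e' \<subseteq> Id"
    and pq: "(p,q) \<in> e" "(p,q) \<in> D" and pp: "(p,p') \<in> e'" and qq: "(q,q') \<in> e'" and pq': "(p',q') \<in> e"
  shows "(p',q') \<in> D"
proof -
  let ?a = "e \<inter> D"
  have a: "is_con ar P G ?a" using con_inter[OF e D] .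
  have sub1: "?a \<union> e' \<subseteq> P \<times> P" using a e' by (auto dest: con_sub)
  have cc: "is_con ar P G (con_join ar P G ?a e')" unfolding con_join_def
    by (rule Cg_con[OF alg sub1])
  have g: "?a \<union> e' \<subseteq> con_join ar P G ?a e'" unfolding con_join_def by (rule Cg_gen)
  have "(p',p) \<in> con_join ar P G ?a e'" using g pp con_sym[OF e'] by blast
  moreover have "(p,q) \<in> con_join ar P G ?a e'" using g pq by blast
  moreover have "(q,q') \<in> con_join ar P G ?a e'" using g qq by blast
  ultimately have "(p',q') \<in> con_join ar P G ?a e'" using con_trans[OF cc] by blast
  with pq' have "(p',q') \<in> con_join ar P G ?a e' \<inter> e" by blast
  also have "\<dots> = con_join ar P G ?a (e' \<inter> e)"
    using m a e e' unfolding modular_con_def by blast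
  also have "\<dots> \<subseteq> ?a" unfolding con_join_def
  proof (rule Cg_least[OF a])
    show "?a \<union> (e' \<inter> e) \<subseteq> ?a" using ee e con_refl[OF a] by (auto dest: con_sub[OF e])
  qed
  finally show ?thesis by blast
qed

definition eta1 :: "'a rel \<Rightarrow> ('a \<times> 'a) rel" where
  "eta1 \<alpha> = {(p,q). p \<in> \<alpha> \<and> q \<in> \<alpha> \<and> fst p = fst q}"
definition eta2 :: "'a rel \<Rightarrow> ('a \<times> 'a) rel" where
  "eta2 \<alpha> = {(p,q). p \<in> \<alpha> \<and> q \<in> \<alpha> \<and> snd p = snd q}"

locale setting =
  fixes ar :: "'f \<Rightarrow> nat" and Eqs :: "(('f, nat) trm \<times> ('f, nat) trm) set"
    and d :: "('f, nat) trm" and A :: "'a set" and F :: "'f \<Rightarrow> 'a list \<Rightarrow> 'a" and \<alpha> :: "'a rel"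
  assumes cmP: "cm_at ar Eqs TYPE('a \<times> 'a)"
    and wf_d: "wf_trm ar d"
    and dtA: "diff_term_at ar Eqs d TYPE('a)"
    and Amod: "is_model ar Eqs A F"
    and acon: "is_con ar A F \<alpha>"
begin

abbreviation "G \<equiv> pair_ops F"
abbreviation "Dl \<equiv> Delta1 ar A F \<alpha>"
abbreviation "gam \<equiv> commutator ar A F \<alpha> (A \<times> A)"

lemma Aalg: "is_alg ar A F" using Amod unfolding is_model_def by blast
lemma asub: "\<alpha> \<subseteq> A \<times> A" using acon unfolding is_con_def by blast

lemma Palg: "is_alg ar \<alpha> G"
  unfolding is_alg_def
proof (intro conjI allI impI)
  obtain x where "x \<in> A" using Aalg unfolding is_alg_def by blast
  then show "\<alpha> \<noteq> {}" using con_refl[OF acon] by blast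
  fix f and xs :: "('a \<times> 'a) list" assume h: "length xs = ar f \<and> set xs \<subseteq> \<alpha>"
  have xi: "\<forall>i<ar f. xs!i \<in> \<alpha>" using h by (metis nth_mem subsetD)
  have "(F f (map fst xs), F f (map snd xs)) \<in> \<alpha>"
    using h xi by (intro con_compat[OF acon]) auto
  then show "G f xs \<in> \<alpha>" by (simp add: pair_ops_def)
qed

lemma Pmod: "is_model ar Eqs \<alpha> G"
  unfolding is_model_def
proof (intro conjI Palg ballI)
  fix e assume "e \<in> Eqs"
  then obtain s t where e: "e = (s,t)" "(s,t) \<in> Eqs" by (cases e) auto
  have st: "sat_id A F s t" using Amod e unfolding is_model_def by blast
  have "sat_id \<alpha> G s t" unfolding sat_id_def
  proof (intro allI impI)
    fix \<sigma> :: "nat \<Rightarrow> 'a \<times> 'a" assume "range \<sigma> \<subseteq> \<alpha>"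
    then have "\<forall>x. \<sigma> x \<in> A \<times> A" using asub by blast
    then have "range (fst \<circ> \<sigma>) \<subseteq> A" "range (snd \<circ> \<sigma>) \<subseteq> A" by (auto simp: mem_Times_iff)
    then show "eval G \<sigma> s = eval G \<sigma> t" using st unfolding sat_id_def eval_pair by simp
  qed
  then show "case e of (s, t) \<Rightarrow> sat_id \<alpha> G s t" using e by simp
qed

lemma Pmodular: "modular_con ar \<alpha> G"
  by (rule cmP[unfolded cm_at_def, rule_format, OF Pmod])

lemma gens_sub: "{((u, u), (v, v)) | u v. (u, v) \<in> A \<times> A} \<subseteq> \<alpha> \<times> \<alpha>"
proof
  fix x assume "x \<in> {((u, u), (v, v)) | u v. (u, v) \<in> A \<times> A}"
  then obtain u v where "x = ((u,u),(v,v))" "u \<in> A" "v \<in> A" by blast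
  then show "x \<in> \<alpha> \<times> \<alpha>" using con_refl[OF acon, of u] con_refl[OF acon, of v] by simp
qed

lemma Dcon: "is_con ar \<alpha> G Dl"
  unfolding Delta1_def by (rule Cg_con[OF Palg gens_sub])

lemma Dgen: "u \<in> A \<Longrightarrow> v \<in> A \<Longrightarrow> ((u,u),(v,v)) \<in> Dl"
proof -
  assume "u \<in> A" "v \<in> A"
  then have "((u,u),(v,v)) \<in> {((u, u), (v, v)) | u v. (u, v) \<in> A \<times> A}" by blast
  then show ?thesis unfolding Delta1_def using Cg_gen[of "{((u, u), (v, v)) | u v. (u, v) \<in> A \<times> A}" ar \<alpha> G] by blast
qed

lemma eta1_con: "is_con ar \<alpha> G (eta1 \<alpha>)"
proof (rule is_conI)
  show "eta1 \<alpha> \<subseteq> \<alpha> \<times> \<alpha>" unfolding eta1_def by blast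
  show "\<And>x. x \<in> \<alpha> \<Longrightarrow> (x, x) \<in> eta1 \<alpha>" unfolding eta1_def by blast
  show "\<And>x y. (x, y) \<in> eta1 \<alpha> \<Longrightarrow> (y, x) \<in> eta1 \<alpha>" unfolding eta1_def by auto
  show "\<And>x y z. (x, y) \<in> eta1 \<alpha> \<Longrightarrow> (y, z) \<in> eta1 \<alpha> \<Longrightarrow> (x, z) \<in> eta1 \<alpha>" unfolding eta1_def by auto
  fix f and xs ys :: "('a \<times> 'a) list"
  assume h: "length xs = ar f" "length ys = ar f" "\<forall>i<ar f. (xs ! i, ys ! i) \<in> eta1 \<alpha>"
  have "\<forall>i<ar f. xs!i \<in> \<alpha> \<and> ys!i \<in> \<alpha>" using h unfolding eta1_def by blast
  then have "set xs \<subseteq> \<alpha>" "set ys \<subseteq> \<alpha>" using h by (metis in_set_conv_nth subsetI)+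
  then have m: "G f xs \<in> \<alpha>" "G f ys \<in> \<alpha>" using h Palg unfolding is_alg_def by blast+
  have "map fst xs = map fst ys" using h unfolding eta1_def by (intro nth_equalityI) auto
  then have "fst (G f xs) = fst (G f ys)" by (simp add: pair_ops_def)
  then show "(G f xs, G f ys) \<in> eta1 \<alpha>" using m unfolding eta1_def by blast
qed

lemma eta2_con: "is_con ar \<alpha> G (eta2 \<alpha>)"
proof (rule is_conI)
  show "eta2 \<alpha> \<subseteq> \<alpha> \<times> \<alpha>" unfolding eta2_def by blast
  show "\<And>x. x \<in> \<alpha> \<Longrightarrow> (x, x) \<in> eta2 \<alpha>" unfolding eta2_def by blast
  show "\<And>x y. (x, y) \<in> eta2 \<alpha> \<Longrightarrow> (y, x) \<in> eta2 \<alpha>" unfolding eta2_def by auto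
  show "\<And>x y z. (x, y) \<in> eta2 \<alpha> \<Longrightarrow> (y, z) \<in> eta2 \<alpha> \<Longrightarrow> (x, z) \<in> eta2 \<alpha>" unfolding eta2_def by auto
  fix f and xs ys :: "('a \<times> 'a) list"
  assume h: "length xs = ar f" "length ys = ar f" "\<forall>i<ar f. (xs ! i, ys ! i) \<in> eta2 \<alpha>"
  have "\<forall>i<ar f. xs!i \<in> \<alpha> \<and> ys!i \<in> \<alpha>" using h unfolding eta2_def by blast
  then have "set xs \<subseteq> \<alpha>" "set ys \<subseteq> \<alpha>" using h by (metis in_set_conv_nth subsetI)+
  then have m: "G f xs \<in> \<alpha>" "G f ys \<in> \<alpha>" using h Palg unfolding is_alg_def by blast+
  have "map snd xs = map snd ys" using h unfolding eta2_def by (intro nth_equalityI) auto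
  then have "snd (G f xs) = snd (G f ys)" by (simp add: pair_ops_def)
  then show "(G f xs, G f ys) \<in> eta2 \<alpha>" using m unfolding eta2_def by blast
qed

lemma eta12: "eta1 \<alpha> \<inter> eta2 \<alpha> \<subseteq> Id" "eta2 \<alpha> \<inter> eta1 \<alpha> \<subseteq> Id"
  unfolding eta1_def eta2_def by (auto simp: prod_eq_iff)

lemma Dsub: "((a,b),(c,e)) \<in> Dl \<Longrightarrow> (a,b) \<in> \<alpha> \<and> (c,e) \<in> \<alpha>"
  using con_sub[OF Dcon] by blast

lemma shift2: assumes "((p,u),(q,u)) \<in> Dl" "(p,w) \<in> \<alpha>" shows "((p,w),(q,w)) \<in> Dl"
proof -
  have pu: "(p,u) \<in> \<alpha>" "(q,u) \<in> \<alpha>" using Dsub[OF assms(1)] by auto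
  have "(q,w) \<in> \<alpha>" using pu assms(2) con_sym[OF acon] con_trans[OF acon] by blast
  then show ?thesis
    using mod_shift[OF Palg Pmodular eta2_con eta1_con Dcon eta12(2), of "(p,u)" "(q,u)" "(p,w)" "(q,w)"]
      assms pu unfolding eta1_def eta2_def by auto
qed

lemma shift1: assumes "((z,x),(z,y)) \<in> Dl" "(w,x) \<in> \<alpha>" shows "((w,x),(w,y)) \<in> Dl"
proof -
  have pu: "(z,x) \<in> \<alpha>" "(z,y) \<in> \<alpha>" using Dsub[OF assms(1)] by auto
  have "(w,y) \<in> \<alpha>" using pu assms(2) con_sym[OF acon] con_trans[OF acon] by blast
  then show ?thesis
    using mod_shift[OF Palg Pmodular eta1_con eta2_con Dcon eta12(1), of "(z,x)" "(z,y)" "(w,x)" "(w,y)"]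
      assms pu unfolding eta1_def eta2_def by auto
qed

end



context setting begin

lemma gcon: "is_con ar A F gam" using comm_con[OF Aalg asub] by blast
lemma gtc: "term_cond ar F \<alpha> (A \<times> A) gam" by (rule comm_tc)
lemma gsub: "gam \<subseteq> \<alpha>" by (rule comm_least[OF acon tc_self[OF acon]]) blast

lemma d_idem: "a \<in> A \<Longrightarrow> b \<in> A \<Longrightarrow> app3 F d a a b = b"
  using dtA[unfolded diff_term_at_def, rule_format, of A F "A \<times> A" a b] Amod total_con[OF Aalg] by blast

lemma d_gam: assumes "(a,b) \<in> \<alpha>" shows "(app3 F d a b b, a) \<in> gam"
proof -
  have "(app3 F d a b b, a) \<in> commutator ar A F \<alpha> \<alpha>"
    using dtA[unfolded diff_term_at_def, rule_format, of A F \<alpha> a b] Amod acon assms by blast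
  moreover have "commutator ar A F \<alpha> \<alpha> \<subseteq> gam" by (rule comm_mono[OF Aalg asub asub]) blast
  ultimately show ?thesis by blast
qed

lemma asym: "(x,y) \<in> \<alpha> \<Longrightarrow> (y,x) \<in> \<alpha>" using con_sym[OF acon] .
lemma atrans: "(x,y) \<in> \<alpha> \<Longrightarrow> (y,z) \<in> \<alpha> \<Longrightarrow> (x,z) \<in> \<alpha>" using con_trans[OF acon] .
lemma arefl: "x \<in> A \<Longrightarrow> (x,x) \<in> \<alpha>" using con_refl[OF acon] .
lemma ain: "(x,y) \<in> \<alpha> \<Longrightarrow> x \<in> A \<and> y \<in> A" using con_sub[OF acon] .
lemma Dsym: "(p,q) \<in> Dl \<Longrightarrow> (q,p) \<in> Dl" using con_sym[OF Dcon] .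
lemma Dtrans: "(p,q) \<in> Dl \<Longrightarrow> (q,r) \<in> Dl \<Longrightarrow> (p,r) \<in> Dl" using con_trans[OF Dcon] .
lemma Drefl: "p \<in> \<alpha> \<Longrightarrow> (p,p) \<in> Dl" using con_refl[OF Dcon] .

definition sim where "sim = {(x,y). (x,y) \<in> \<alpha> \<and> (\<forall>w. (x,w) \<in> \<alpha> \<longrightarrow> ((x,w),(y,w)) \<in> Dl)}"

lemma sim_con: "is_con ar A F sim"
proof (rule is_conI)
  show "sim \<subseteq> A \<times> A" unfolding sim_def using asub by blast
  show "\<And>x. x \<in> A \<Longrightarrow> (x, x) \<in> sim" unfolding sim_def using arefl Drefl by blast
  show "\<And>x y. (x, y) \<in> sim \<Longrightarrow> (y, x) \<in> sim"
  proof -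
    fix x y assume "(x, y) \<in> sim"
    then have h: "(x, y) \<in> \<alpha>" "\<forall>w. (x, w) \<in> \<alpha> \<longrightarrow> ((x, w), y, w) \<in> Dl" unfolding sim_def by blast+
    have "\<forall>w. (y, w) \<in> \<alpha> \<longrightarrow> ((y, w), x, w) \<in> Dl"
    proof (intro allI impI)
      fix w assume "(y,w) \<in> \<alpha>"
      then have "(x,w) \<in> \<alpha>" using h atrans by blast
      then show "((y, w), x, w) \<in> Dl" using h Dsym by blast
    qed
    then show "(y,x) \<in> sim" unfolding sim_def using h asym by blast
  qed
  show "\<And>x y z. (x, y) \<in> sim \<Longrightarrow> (y, z) \<in> sim \<Longrightarrow> (x, z) \<in> sim"
  proof -
    fix x y z assume "(x, y) \<in> sim" "(y, z) \<in> sim"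
    then have h: "(x, y) \<in> \<alpha>" "\<forall>w. (x, w) \<in> \<alpha> \<longrightarrow> ((x, w), y, w) \<in> Dl"
      "(y, z) \<in> \<alpha>" "\<forall>w. (y, w) \<in> \<alpha> \<longrightarrow> ((y, w), z, w) \<in> Dl" unfolding sim_def by blast+
    have "\<forall>w. (x, w) \<in> \<alpha> \<longrightarrow> ((x, w), z, w) \<in> Dl"
    proof (intro allI impI)
      fix w assume "(x,w) \<in> \<alpha>"
      moreover have "(y,w) \<in> \<alpha>" using h calculation atrans asym by blast
      ultimately show "((x, w), z, w) \<in> Dl" using h Dtrans by blast
    qed
    then show "(x,z) \<in> sim" unfolding sim_def using h atrans by blast
  qed
  fix f xs ys assume h: "length xs = ar f" "length ys = ar f" "\<forall>i<ar f. (xs ! i, ys ! i) \<in> sim"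
  let ?ps = "map (\<lambda>i. (xs!i, xs!i)) [0..<ar f]" and ?qs = "map (\<lambda>i. (ys!i, xs!i)) [0..<ar f]"
  have D1: "\<forall>i<ar f. (?ps!i, ?qs!i) \<in> Dl"
  proof (intro allI impI)
    fix i assume i: "i < ar f"
    then have "(xs!i, ys!i) \<in> \<alpha>" "xs!i \<in> A" using h ain unfolding sim_def by blast+
    then have "((xs!i, xs!i), (ys!i, xs!i)) \<in> Dl" using h i arefl unfolding sim_def by blast
    then show "(?ps!i, ?qs!i) \<in> Dl" using i by simp
  qed
  have "(G f ?ps, G f ?qs) \<in> Dl" by (rule con_compat[OF Dcon]) (use D1 in auto)
  moreover have "G f ?ps = (F f xs, F f xs)"
  proof -
    have "map fst ?ps = xs" "map snd ?ps = xs" using h by (auto intro!: nth_equalityI)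
    then show ?thesis by (simp add: pair_ops_def)
  qed
  moreover have "G f ?qs = (F f ys, F f xs)"
  proof -
    have "map fst ?qs = ys" "map snd ?qs = xs" using h by (auto intro!: nth_equalityI)
    then show ?thesis by (simp add: pair_ops_def)
  qed
  ultimately have D2: "((F f xs, F f xs), (F f ys, F f xs)) \<in> Dl" by simp
  have "(F f xs, F f ys) \<in> \<alpha>" using h unfolding sim_def by (intro con_compat[OF acon]) auto
  then show "(F f xs, F f ys) \<in> sim" unfolding sim_def using shift2[OF D2] by blast
qed

lemma fst_case_sum: "fst \<circ> case_sum (\<lambda>i. (a i, b i)) (\<lambda>j. (c j, e j)) = case_sum a c"
  by (rule ext) (simp split: sum.split)
lemma snd_case_sum: "snd \<circ> case_sum (\<lambda>i. (a i, b i)) (\<lambda>j. (c j, e j)) = case_sum b e"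
  by (rule ext) (simp split: sum.split)

lemma sim_tc: "term_cond ar F \<alpha> (A \<times> A) sim"
  unfolding term_cond_def
proof (intro allI impI)
  fix t :: "('f, nat + nat) trm" and a b c e :: "nat \<Rightarrow> 'a"
  assume h: "wf_trm ar t \<and> (\<forall>i. (a i, b i) \<in> \<alpha>) \<and> (\<forall>j. (c j, e j) \<in> A \<times> A) \<and>
       (eval F (case_sum a c) t, eval F (case_sum a e) t) \<in> sim"
  let ?sc = "case_sum (\<lambda>i. (a i, b i)) (\<lambda>j. (c j, c j))"
  let ?se = "case_sum (\<lambda>i. (a i, b i)) (\<lambda>j. (e j, e j))"
  define tac where "tac = eval F (case_sum a c) t"
  define tbc where "tbc = eval F (case_sum b c) t"
  define tae where "tae = eval F (case_sum a e) t"
  define tbe where "tbe = eval F (case_sum b e) t"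
  have ec: "eval G ?sc t = (tac, tbc)" unfolding eval_pair fst_case_sum snd_case_sum tac_def tbc_def ..
  have ee: "eval G ?se t = (tae, tbe)" unfolding eval_pair fst_case_sum snd_case_sum tae_def tbe_def ..
  have "\<forall>v. (?sc v, ?se v) \<in> Dl"
  proof
    fix v show "(?sc v, ?se v) \<in> Dl"
    proof (cases v)
      case (Inl i) then show ?thesis using h Drefl by simp
    next
      case (Inr j) then show ?thesis using h Dgen by simp
    qed
  qed
  then have "(eval G ?sc t, eval G ?se t) \<in> Dl" using h by (intro eval_con[OF Dcon]) auto
  then have D0: "((tac,tbc),(tae,tbe)) \<in> Dl" using ec ee by simp
  then have m: "(tac,tbc) \<in> \<alpha>" "(tae,tbe) \<in> \<alpha>" using Dsub by blast+
  have s: "(tac,tae) \<in> \<alpha>" "\<forall>w. (tac,w) \<in> \<alpha> \<longrightarrow> ((tac,w),(tae,w)) \<in> Dl"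
    using h unfolding sim_def tac_def tae_def by blast+
  have "(tac,tbe) \<in> \<alpha>" using s m atrans by blast
  then have "((tac,tbe),(tae,tbe)) \<in> Dl" using s by blast
  then have "((tac,tbc),(tac,tbe)) \<in> Dl" using D0 Dsym Dtrans by blast
  then have D1: "((tbc,tbc),(tbc,tbe)) \<in> Dl" using shift1 m arefl ain by blast
  have inA: "tbc \<in> A" "tbe \<in> A" using m ain by blast+
  then have "((tbc,tbc),(tbe,tbe)) \<in> Dl" by (rule Dgen)
  then have D2: "((tbe,tbe),(tbc,tbe)) \<in> Dl" using D1 Dsym Dtrans by blast
  have cb: "(tbc,tbe) \<in> \<alpha>" using m s atrans asym by blast
  have "\<forall>w. (tbc,w) \<in> \<alpha> \<longrightarrow> ((tbc,w),(tbe,w)) \<in> Dl"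
  proof (intro allI impI)
    fix w assume "(tbc,w) \<in> \<alpha>"
    then have "(tbe,w) \<in> \<alpha>" using cb atrans asym by blast
    then show "((tbc,w),(tbe,w)) \<in> Dl" using shift2[OF D2] Dsym by blast
  qed
  then show "(eval F (case_sum b c) t, eval F (case_sum b e) t) \<in> sim"
    using cb unfolding sim_def tbc_def tbe_def by blast
qed

lemma gam_sim: "gam \<subseteq> sim" by (rule comm_least[OF sim_con sim_tc])

lemma W: "(x,y) \<in> gam \<Longrightarrow> (x,w) \<in> \<alpha> \<Longrightarrow> ((x,w),(y,w)) \<in> Dl"
  using gam_sim unfolding sim_def by blast

end



definition D3 :: "('f, nat) trm \<Rightarrow> ('f, 'v) trm \<Rightarrow> ('f, 'v) trm \<Rightarrow> ('f, 'v) trm \<Rightarrow> ('f, 'v) trm" where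
  "D3 dd x y z = subst (\<lambda>i. if i = 0 then x else if i = 1 then y else z) dd"

lemma eval_D3: "eval F \<sigma> (D3 dd x y z) = app3 F dd (eval F \<sigma> x) (eval F \<sigma> y) (eval F \<sigma> z)"
proof -
  have fe: "(\<lambda>v. eval F \<sigma> (if v = 0 then x else if v = 1 then y else z)) =
        (\<lambda>i. if i = 0 then eval F \<sigma> x else if i = 1 then eval F \<sigma> y else eval F \<sigma> z)"
    by (rule ext) simp
  show ?thesis unfolding D3_def eval_subst app3_def fe ..
qed

lemma wf_D3: "wf_trm ar dd \<Longrightarrow> wf_trm ar x \<Longrightarrow> wf_trm ar y \<Longrightarrow> wf_trm ar z \<Longrightarrow> wf_trm ar (D3 dd x y z)"
  unfolding D3_def by (rule wf_subst) auto

context setting begin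

lemma gsym: "(x,y) \<in> gam \<Longrightarrow> (y,x) \<in> gam" using con_sym[OF gcon] .
lemma gtrans: "(x,y) \<in> gam \<Longrightarrow> (y,z) \<in> gam \<Longrightarrow> (x,z) \<in> gam" using con_trans[OF gcon] .
lemma grefl: "x \<in> A \<Longrightarrow> (x,x) \<in> gam" using con_refl[OF gcon] .

lemma affine:
  fixes t :: "('f, nat) trm" and a b c :: "nat \<Rightarrow> 'a"
  assumes t: "wf_trm ar t" and ab: "\<forall>i. (a i, b i) \<in> \<alpha>" and c: "\<forall>i. c i \<in> A"
  shows "(app3 F d (eval F a t) (eval F b t) (eval F c t), eval F (\<lambda>i. app3 F d (a i) (b i) (c i)) t) \<in> gam"
proof -
  have aA: "a i \<in> A" "b i \<in> A" for i using ab ain by blast+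
  define ta where "ta = eval F a t"
  define tb where "tb = eval F b t"
  define tc where "tc = eval F c t"
  have inA: "ta \<in> A" "tb \<in> A" "tc \<in> A" unfolding ta_def tb_def tc_def
    using eval_in[OF Aalg t] aA c by auto
  define Q where "Q = app3 F d ta tb tc"
  have QA: "Q \<in> A" unfolding Q_def using app3_in[OF Aalg wf_d] inA by blast
  define P where "P = eval F (\<lambda>i. app3 F d (a i) (b i) (c i)) t"
  let ?inner = "subst (\<lambda>i. D3 d (Var (Inl i)) (Var (Inr (3*i+1))) (Var (Inr (3*i+2)))) t"
  let ?tx = "subst (\<lambda>i. Var (Inl i)) t :: ('f, nat + nat) trm"
  let ?ty = "subst (\<lambda>i. Var (Inr (3*i+1))) t :: ('f, nat + nat) trm"
  let ?tz = "subst (\<lambda>i. Var (Inr (3*i+2))) t :: ('f, nat + nat) trm"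
  let ?E = "D3 d ?inner (D3 d ?tx ?ty ?tz) (Var (Inr 0))"
  have wfE: "wf_trm ar ?E"
    by (intro wf_D3 wf_d wf_subst t) (auto intro!: wf_D3 wf_d)
  have evE: "eval F (case_sum X Y) ?E = app3 F d (eval F (\<lambda>i. app3 F d (X i) (Y (3*i+1)) (Y (3*i+2))) t)
      (app3 F d (eval F X t) (eval F (\<lambda>i. Y (3*i+1)) t) (eval F (\<lambda>i. Y (3*i+2)) t)) (Y 0)"
    for X Y :: "nat \<Rightarrow> 'a"
    by (simp add: eval_D3 eval_subst)
  define Yc where "Yc = (\<lambda>n::nat. if n mod 3 = 0 then Q else if n mod 3 = 1 then b (n div 3) else c (n div 3))"
  define Yb where "Yb = (\<lambda>n::nat. if n mod 3 = 0 then Q else if n mod 3 = 1 then b (n div 3) else b (n div 3))"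
  have m: "(3*i+1) mod 3 = (1::nat)" "(3*i+1) div 3 = i" "(3*i+2) mod 3 = (2::nat)" "(3*i+2) div 3 = i" for i :: nat
    by presburger+
  have Yc: "(\<lambda>i. Yc (3*i+1)) = b" "(\<lambda>i. Yc (3*i+2)) = c" "Yc 0 = Q" unfolding Yc_def
    by (rule ext, simp only: m, simp)+ simp
  have Yb: "(\<lambda>i. Yb (3*i+1)) = b" "(\<lambda>i. Yb (3*i+2)) = b" "Yb 0 = Q" unfolding Yb_def
    by (rule ext, simp only: m, simp)+ simp
  have Ycp: "Yc (3*i+1) = b i" "Yc (3*i+2) = c i" for i unfolding Yc_def by (simp only: m, simp)+
  have Ybp: "Yb (3*i+1) = b i" "Yb (3*i+2) = b i" for i unfolding Yb_def by (simp only: m, simp)+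
  have YcA: "\<forall>j. Yc j \<in> A" unfolding Yc_def using QA aA c by auto
  have YbA: "\<forall>j. Yb j \<in> A" unfolding Yb_def using QA aA by auto
  have bbc: "(\<lambda>i. app3 F d (b i) (b i) (c i)) = c" using d_idem aA c by auto
  have bbb: "(\<lambda>i. app3 F d (b i) (b i) (b i)) = b" using d_idem aA by auto
  have e1: "eval F (case_sum b Yc) ?E = Q"
    unfolding evE Ycp Yc(3) bbc using d_idem inA QA tb_def tc_def by simp
  have e2: "eval F (case_sum b Yb) ?E = Q"
    unfolding evE Ybp Yb(3) bbb using d_idem inA QA tb_def by simp
  have e3: "eval F (case_sum a Yc) ?E = app3 F d P Q Q"
    unfolding evE Ycp Yc(3) P_def Q_def ta_def tb_def tc_def ..
  have e4: "eval F (case_sum a Yb) ?E = app3 F d (eval F (\<lambda>i. app3 F d (a i) (b i) (b i)) t) (app3 F d ta tb tb) Q"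
    unfolding evE Ybp Yb(3) ta_def tb_def ..
  have "(eval F (case_sum a Yc) ?E, eval F (case_sum a Yb) ?E) \<in> gam"
  proof -
    have "(eval F (case_sum b Yc) ?E, eval F (case_sum b Yb) ?E) \<in> gam" using e1 e2 grefl QA by simp
    moreover have "\<forall>i. (b i, a i) \<in> \<alpha>" using ab asym by blast
    moreover have "\<forall>j. (Yc j, Yb j) \<in> A \<times> A" using YcA YbA by blast
    ultimately show ?thesis using gtc wfE unfolding term_cond_def by blast
  qed
  then have g0: "(app3 F d P Q Q, app3 F d (eval F (\<lambda>i. app3 F d (a i) (b i) (b i)) t) (app3 F d ta tb tb) Q) \<in> gam"
    using e3 e4 by simp
  have g1: "(eval F (\<lambda>i. app3 F d (a i) (b i) (b i)) t, ta) \<in> gam"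
    unfolding ta_def using d_gam ab by (intro eval_con[OF gcon t]) blast
  have tab: "(ta,tb) \<in> \<alpha>" unfolding ta_def tb_def using ab by (intro eval_con[OF acon t]) blast
  have g2: "(app3 F d ta tb tb, ta) \<in> gam" using d_gam[OF tab] .
  have "(app3 F d (eval F (\<lambda>i. app3 F d (a i) (b i) (b i)) t) (app3 F d ta tb tb) Q, app3 F d ta ta Q) \<in> gam"
    using app3_con[OF gcon wf_d g1 g2 grefl[OF QA]] .
  then have "(app3 F d P Q Q, Q) \<in> gam" using g0 d_idem[OF inA(1) QA] gtrans by metis
  moreover have "(P, Q) \<in> \<alpha>"
  proof -
    have "\<forall>i. (app3 F d (a i) (b i) (c i), c i) \<in> \<alpha>"
    proof
      fix i
      have "(app3 F d (a i) (b i) (c i), app3 F d (b i) (b i) (c i)) \<in> \<alpha>"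
        using app3_con[OF acon wf_d] ab arefl aA c by blast
      then show "(app3 F d (a i) (b i) (c i), c i) \<in> \<alpha>" using d_idem aA c by simp
    qed
    then have "(P, tc) \<in> \<alpha>" unfolding P_def tc_def by (intro eval_con[OF acon t]) blast
    moreover have "(Q, app3 F d tb tb tc) \<in> \<alpha>" unfolding Q_def
      using app3_con[OF acon wf_d tab arefl[OF inA(2)] arefl[OF inA(3)]] .
    then have "(Q, tc) \<in> \<alpha>" using d_idem inA by simp
    ultimately show ?thesis using atrans asym by blast
  qed
  then have "(app3 F d P Q Q, P) \<in> gam" by (rule d_gam)
  ultimately have "(Q, P) \<in> gam" using gsym gtrans by blast
  then show ?thesis unfolding Q_def P_def ta_def tb_def tc_def .
qed

end



context setting begin

lemma affine_op:
  assumes l: "length as = ar f" "length bs = ar f" "length es = ar f"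
    and ab: "\<forall>i<ar f. (as!i, bs!i) \<in> \<alpha>" and e: "set es \<subseteq> A"
  shows "(app3 F d (F f as) (F f bs) (F f es), F f (map (\<lambda>i. app3 F d (as!i) (bs!i) (es!i)) [0..<ar f])) \<in> gam"
proof -
  obtain x0 where x0: "x0 \<in> A" using Aalg unfolding is_alg_def by blast
  define a where "a = (\<lambda>i. if i < ar f then as!i else x0)"
  define b where "b = (\<lambda>i. if i < ar f then bs!i else x0)"
  define c where "c = (\<lambda>i. if i < ar f then es!i else x0)"
  let ?t = "Op f (map Var [0..<ar f]) :: ('f, nat) trm"
  have wf: "wf_trm ar ?t" by simp
  have ab': "\<forall>i. (a i, b i) \<in> \<alpha>" unfolding a_def b_def using ab arefl[OF x0] by auto
  have c': "\<forall>i. c i \<in> A" unfolding c_def using e x0 l by (auto simp: nth_mem subset_iff)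
  have ea: "eval F a ?t = F f as" unfolding a_def using l by (simp, intro arg_cong[where f="F f"] nth_equalityI) auto
  have eb: "eval F b ?t = F f bs" unfolding b_def using l by (simp, intro arg_cong[where f="F f"] nth_equalityI) auto
  have ec: "eval F c ?t = F f es" unfolding c_def using l by (simp, intro arg_cong[where f="F f"] nth_equalityI) auto
  have ed: "eval F (\<lambda>i. app3 F d (a i) (b i) (c i)) ?t = F f (map (\<lambda>i. app3 F d (as!i) (bs!i) (es!i)) [0..<ar f])"
    unfolding a_def b_def c_def by (simp add: comp_def, intro arg_cong[where f="F f"] map_cong) auto
  show ?thesis using affine[OF wf ab' c'] unfolding ea eb ec ed .
qed

lemma K: assumes ab: "(a,b) \<in> \<alpha>" and e: "e \<in> A" and g: "g \<in> A"
  shows "(app3 F d (app3 F d a b e) e g, app3 F d a b g) \<in> gam"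
proof -
  have aA: "a \<in> A" "b \<in> A" using ab ain by blast+
  define A1 where "A1 = (\<lambda>i::nat. if i = 0 then a else if i = 1 then b else e)"
  define B1 where "B1 = (\<lambda>i::nat. if i = 0 then b else if i = 1 then b else e)"
  define C1 where "C1 = (\<lambda>i::nat. if i = 0 then b else if i = 1 then b else g)"
  have ab1: "\<forall>i. (A1 i, B1 i) \<in> \<alpha>" unfolding A1_def B1_def using ab arefl aA e by auto
  have c1: "\<forall>i. C1 i \<in> A" unfolding C1_def using aA g by auto
  have h: "(app3 F d (eval F A1 d) (eval F B1 d) (eval F C1 d), eval F (\<lambda>i. app3 F d (A1 i) (B1 i) (C1 i)) d) \<in> gam"
    by (rule affine[OF wf_d ab1 c1])
  have e1: "eval F A1 d = app3 F d a b e" unfolding A1_def app3_def ..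
  have e2: "eval F B1 d = e" using d_idem[OF aA(2) e] unfolding B1_def app3_def by simp
  have e3: "eval F C1 d = g" using d_idem[OF aA(2) g] unfolding C1_def app3_def by simp
  have fe: "(\<lambda>i. app3 F d (A1 i) (B1 i) (C1 i)) = (\<lambda>i::nat. if i = 0 then app3 F d a b b else if i = 1 then b else g)"
    unfolding A1_def B1_def C1_def using d_idem aA e g by (auto intro!: ext)
  have e4: "eval F (\<lambda>i. app3 F d (A1 i) (B1 i) (C1 i)) d = app3 F d (app3 F d a b b) b g"
    by (subst fe) (simp only: app3_def)
  have "(app3 F d (app3 F d a b b) b g, app3 F d a b g) \<in> gam"
    using app3_con[OF gcon wf_d d_gam[OF ab] grefl[OF aA(2)] grefl[OF g]] .
  then show ?thesis using h unfolding e1 e2 e3 e4 using gtrans by blast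
qed

definition Rr where "Rr = {(p,q). p \<in> \<alpha> \<and> q \<in> \<alpha> \<and> (app3 F d (fst p) (snd p) (snd q), fst q) \<in> gam}"

lemma Rr_con: "is_con ar \<alpha> G Rr"
proof (rule is_conI)
  show "Rr \<subseteq> \<alpha> \<times> \<alpha>" unfolding Rr_def by blast
  show "\<And>x. x \<in> \<alpha> \<Longrightarrow> (x, x) \<in> Rr" unfolding Rr_def using d_gam by auto
  show "\<And>x y. (x, y) \<in> Rr \<Longrightarrow> (y, x) \<in> Rr"
  proof -
    fix p q assume "(p,q) \<in> Rr"
    then obtain a b c e where pq: "p = (a,b)" "q = (c,e)" "(a,b) \<in> \<alpha>" "(c,e) \<in> \<alpha>"
      "(app3 F d a b e, c) \<in> gam" unfolding Rr_def by (cases p; cases q) auto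
    have A: "a \<in> A" "b \<in> A" "c \<in> A" "e \<in> A" using pq ain by blast+
    have "(app3 F d c e b, app3 F d (app3 F d a b e) e b) \<in> gam"
      using app3_con[OF gcon wf_d gsym[OF pq(5)] grefl[OF A(4)] grefl[OF A(2)]] .
    moreover have "(app3 F d (app3 F d a b e) e b, app3 F d a b b) \<in> gam" using K pq A by blast
    moreover have "(app3 F d a b b, a) \<in> gam" using d_gam pq by blast
    ultimately have "(app3 F d c e b, a) \<in> gam" using gtrans by blast
    then show "(q,p) \<in> Rr" unfolding Rr_def using pq by simp
  qed
  show "\<And>x y z. (x, y) \<in> Rr \<Longrightarrow> (y, z) \<in> Rr \<Longrightarrow> (x, z) \<in> Rr"
  proof -
    fix p q r assume "(p,q) \<in> Rr" "(q,r) \<in> Rr"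
    then obtain a b c e h g where pq: "p = (a,b)" "q = (c,e)" "r = (h,g)" "(a,b) \<in> \<alpha>" "(c,e) \<in> \<alpha>"
      "(h,g) \<in> \<alpha>" "(app3 F d a b e, c) \<in> gam" "(app3 F d c e g, h) \<in> gam" unfolding Rr_def by (cases p; cases q; cases r) auto
    have A: "a \<in> A" "b \<in> A" "c \<in> A" "e \<in> A" "g \<in> A" using pq ain by blast+
    have "(app3 F d a b g, app3 F d (app3 F d a b e) e g) \<in> gam" using K pq A gsym by blast
    moreover have "(app3 F d (app3 F d a b e) e g, app3 F d c e g) \<in> gam"
      using app3_con[OF gcon wf_d pq(7) grefl[OF A(4)] grefl[OF A(5)]] .
    ultimately have "(app3 F d a b g, h) \<in> gam" using pq(8) gtrans by blast
    then show "(p,r) \<in> Rr" unfolding Rr_def using pq by simp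
  qed
  fix f and xs ys :: "('a \<times> 'a) list"
  assume h: "length xs = ar f" "length ys = ar f" "\<forall>i<ar f. (xs ! i, ys ! i) \<in> Rr"
  have hi: "\<forall>i<ar f. xs!i \<in> \<alpha> \<and> ys!i \<in> \<alpha>" using h unfolding Rr_def by blast
  then have "set xs \<subseteq> \<alpha>" "set ys \<subseteq> \<alpha>" using h by (metis in_set_conv_nth subsetI)+
  then have m: "G f xs \<in> \<alpha>" "G f ys \<in> \<alpha>" using h Palg unfolding is_alg_def by blast+
  let ?as = "map fst xs" and ?bs = "map snd xs" and ?cs = "map fst ys" and ?es = "map snd ys"
  have ab: "\<forall>i<ar f. (?as!i, ?bs!i) \<in> \<alpha>" using hi h by simp
  have es: "set ?es \<subseteq> A" using hi h ain by (auto simp: in_set_conv_nth) (metis prod.collapse)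
  have g1: "(app3 F d (F f ?as) (F f ?bs) (F f ?es), F f (map (\<lambda>i. app3 F d (?as!i) (?bs!i) (?es!i)) [0..<ar f])) \<in> gam"
    by (rule affine_op) (use h ab es in auto)
  have "\<forall>i<ar f. (map (\<lambda>i. app3 F d (?as!i) (?bs!i) (?es!i)) [0..<ar f] ! i, ?cs ! i) \<in> gam"
    using h unfolding Rr_def by simp
  then have g2: "(F f (map (\<lambda>i. app3 F d (?as!i) (?bs!i) (?es!i)) [0..<ar f]), F f ?cs) \<in> gam"
    using h by (intro con_compat[OF gcon]) auto
  have "(app3 F d (fst (G f xs)) (snd (G f xs)) (snd (G f ys)), fst (G f ys)) \<in> gam"
    using gtrans[OF g1 g2] by (simp add: pair_ops_def)
  then show "(G f xs, G f ys) \<in> Rr" unfolding Rr_def using m by simp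
qed

lemma D_Rr: "Dl \<subseteq> Rr"
  unfolding Delta1_def
proof (rule Cg_least[OF Rr_con])
  show "{((u, u), v, v) |u v. (u, v) \<in> A \<times> A} \<subseteq> Rr"
    unfolding Rr_def using arefl d_idem grefl by auto
qed

lemma I: assumes "((x,v),(y,v)) \<in> Dl" shows "(x,y) \<in> gam"
proof -
  have "((x,v),(y,v)) \<in> Rr" using D_Rr assms by blast
  then have 1: "(app3 F d x v v, y) \<in> gam" "(x,v) \<in> \<alpha>" unfolding Rr_def by auto
  then have "(app3 F d x v v, x) \<in> gam" using d_gam by blast
  then show ?thesis using 1 gsym gtrans by blast
qed

end



context setting begin

definition sel :: "'b set \<Rightarrow> 'b" where "sel X = (SOME x. x \<in> X)"

lemma sel_class: assumes "is_con ar B H \<theta>" "x \<in> B" shows "(x, sel (\<theta>``{x})) \<in> \<theta>"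
proof -
  have "x \<in> \<theta>``{x}" using con_refl[OF assms] by simp
  then have "sel (\<theta>``{x}) \<in> \<theta>``{x}" unfolding sel_def by (rule someI)
  then show ?thesis by simp
qed

lemma sel_quot: assumes "is_con ar B H \<theta>" "X \<in> B // \<theta>" shows "sel X \<in> X" "sel X \<in> B" "X = \<theta>``{sel X}"
proof -
  obtain x where x: "X = \<theta>``{x}" "x \<in> B" using assms(2) by (rule quotientE)
  have 1: "(x, sel X) \<in> \<theta>" using sel_class[OF assms(1) x(2)] x(1) by simp
  have "sel X \<in> \<theta>``{x}" using 1 by simp
  then show "sel X \<in> X" using x(1) by simp
  show "sel X \<in> B" using con_sub[OF assms(1) 1] by blast
  show "X = \<theta>``{sel X}" by (rule trans[OF x(1) con_class[OF assms(1) 1]])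
qed

definition HH where "HH x = (Dl``{(x, sel (\<alpha>``{x}))}, \<alpha>``{x})"

lemma HH_in: "x \<in> A \<Longrightarrow> HH x \<in> (\<alpha> // Dl) \<times> (A // \<alpha>)"
proof -
  assume x: "x \<in> A"
  have "(x, sel (\<alpha>``{x})) \<in> \<alpha>" using sel_class[OF acon x] .
  then show ?thesis unfolding HH_def using x by (simp add: quotientI)
qed

lemma HH_resp: assumes "(x,y) \<in> gam" shows "HH x = HH y"
proof -
  have xy: "(x,y) \<in> \<alpha>" using assms gsub by blast
  then have ca: "\<alpha>``{x} = \<alpha>``{y}" using con_class[OF acon] by blast
  have "(x, sel (\<alpha>``{x})) \<in> \<alpha>" using sel_class[OF acon] ain xy by blast
  then have "((x, sel (\<alpha>``{x})), (y, sel (\<alpha>``{x}))) \<in> Dl" using W assms by blast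
  then show ?thesis unfolding HH_def using ca con_class[OF Dcon] by metis
qed

lemma HH_inj: assumes "x \<in> A" "y \<in> A" "HH x = HH y" shows "(x,y) \<in> gam"
proof -
  have ca: "\<alpha>``{x} = \<alpha>``{y}" and cd: "Dl``{(x, sel (\<alpha>``{x}))} = Dl``{(y, sel (\<alpha>``{x}))}"
    using assms(3) unfolding HH_def by auto
  have "(y, sel (\<alpha>``{y})) \<in> \<alpha>" using sel_class[OF acon assms(2)] .
  then have "((x, sel (\<alpha>``{x})), (y, sel (\<alpha>``{x}))) \<in> Dl"
    using cd ca con_refl[OF Dcon] by (metis Image_singleton_iff)
  then show ?thesis by (rule I)
qed

lemma HH_surj: assumes "P \<in> (\<alpha> // Dl) \<times> (A // \<alpha>)" shows "\<exists>x\<in>A. HH x = P"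
proof -
  obtain X q where P: "P = (X,q)" "X \<in> \<alpha> // Dl" "q \<in> A // \<alpha>" using assms by blast
  obtain p where p: "X = Dl``{p}" "p \<in> \<alpha>" using P(2) by (rule quotientE)
  obtain a b where ab: "p = (a,b)" by (cases p)
  have abA: "(a,b) \<in> \<alpha>" "a \<in> A" "b \<in> A" using p ab ain by auto
  obtain v where v: "q = \<alpha>``{v}" "v \<in> A" using P(3) by (rule quotientE)
  define v' where "v' = sel (\<alpha>``{v})"
  have vv: "(v,v') \<in> \<alpha>" "v' \<in> A" unfolding v'_def using sel_class[OF acon v(2)] ain by blast+
  define x where "x = app3 F d a b v'"
  have xA: "x \<in> A" unfolding x_def using app3_in[OF Aalg wf_d] abA vv by blast
  have "(x, app3 F d b b v') \<in> \<alpha>" unfolding x_def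
    using app3_con[OF acon wf_d abA(1) arefl[OF abA(3)] arefl[OF vv(2)]] .
  then have xv': "(x, v') \<in> \<alpha>" using d_idem abA vv by simp
  then have cx: "\<alpha>``{x} = q" using v vv con_class[OF acon] asym atrans by metis
  have "(app3 G d (a,b) (b,b) (v',v'), app3 G d (a,b) (b,b) (b,b)) \<in> Dl"
    using app3_con[OF Dcon wf_d Drefl[OF abA(1)] Drefl[OF arefl[OF abA(3)]] Dgen[OF vv(2) abA(3)]] .
  then have D1: "((x, v'), (app3 F d a b b, b)) \<in> Dl"
    unfolding app3_pair x_def using d_idem abA vv by simp
  have "(app3 F d a b b, a) \<in> gam" using d_gam[OF abA(1)] .
  moreover have "(app3 F d a b b, b) \<in> \<alpha>" using D1 Dsub by blast
  ultimately have "((app3 F d a b b, b), (a, b)) \<in> Dl" using W by blast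
  then have "((x, v'), (a,b)) \<in> Dl" using D1 Dtrans by blast
  then have "Dl``{(x, v')} = X" using p ab con_class[OF Dcon] by metis
  then have "HH x = P" unfolding HH_def cx using P v v'_def by simp
  then show ?thesis using xA by blast
qed

definition hh where "hh X = HH (sel X)"

lemma hh_class: "x \<in> A \<Longrightarrow> hh (gam``{x}) = HH x"
proof -
  assume x: "x \<in> A"
  have "(x, sel (gam``{x})) \<in> gam" by (rule sel_class[OF gcon x])
  then have "HH x = HH (sel (gam``{x}))" by (rule HH_resp)
  then show ?thesis unfolding hh_def by simp
qed

definition TT :: "'f \<Rightarrow> 'a set list \<Rightarrow> ('a \<times> 'a) set" where
  "TT f qs = Dl``{(F f (map sel qs), sel (quot_ops F \<alpha> f qs))}"

lemma TT_in: assumes "length qs = ar f" "set qs \<subseteq> A // \<alpha>" shows "TT f qs \<in> \<alpha> // Dl"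
proof -
  have "set (map sel qs) \<subseteq> A" using assms(2) sel_quot[OF acon] by auto
  then have "F f (map sel qs) \<in> A" using alg_op[OF Aalg] assms(1) by simp
  then have "(F f (map sel qs), sel (\<alpha>``{F f (map sel qs)})) \<in> \<alpha>"
    by (rule sel_class[OF acon])
  moreover have "quot_ops F \<alpha> f qs = \<alpha>``{F f (map sel qs)}" unfolding quot_ops_def sel_def ..
  ultimately have "(F f (map sel qs), sel (quot_ops F \<alpha> f qs)) \<in> \<alpha>" by simp
  then show ?thesis unfolding TT_def by (rule quotientI)
qed

lemma zero_eq: assumes "c \<in> A" shows "diag_class A \<alpha> Dl = Dl``{(c,c)}"
  unfolding diag_class_def
proof (rule the_equality)
  show "Dl``{(c,c)} \<in> \<alpha> // Dl \<and> (\<forall>u\<in>A. (u, u) \<in> Dl``{(c,c)})"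
  proof
    show "Dl``{(c,c)} \<in> \<alpha> // Dl" by (rule quotientI[OF arefl[OF assms]])
    show "\<forall>u\<in>A. (u, u) \<in> Dl``{(c,c)}" using Dgen[OF assms] by simp
  qed
  fix X assume X: "X \<in> \<alpha> // Dl \<and> (\<forall>u\<in>A. (u, u) \<in> X)"
  then have "X \<in> \<alpha> // Dl" by blast
  then obtain p where p: "X = Dl``{p}" "p \<in> \<alpha>" by (rule quotientE)
  have "(c,c) \<in> X" using X assms by blast
  then have "(p, (c,c)) \<in> Dl" using p(1) by simp
  then show "X = Dl``{(c,c)}" using p(1) con_class[OF Dcon] by simp
qed

lemma main: "\<exists>T :: 'f \<Rightarrow> 'a set list \<Rightarrow> ('a \<times> 'a) set.
   (\<forall>f qs. length qs = ar f \<and> set qs \<subseteq> A // \<alpha> \<longrightarrow> T f qs \<in> \<alpha> // Dl) \<and>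
   iso ar (A // gam) (quot_ops F gam) ((\<alpha> // Dl) \<times> (A // \<alpha>))
     (tensor_ops (quot_ops G Dl) (\<lambda>x y. app3 (quot_ops G Dl) d x (diag_class A \<alpha> Dl) y) T (quot_ops F \<alpha>))"
proof (intro exI conjI)
  show "\<forall>f qs. length qs = ar f \<and> set qs \<subseteq> A // \<alpha> \<longrightarrow> TT f qs \<in> \<alpha> // Dl" using TT_in by blast
  show "iso ar (A // gam) (quot_ops F gam) ((\<alpha> // Dl) \<times> (A // \<alpha>))
     (tensor_ops (quot_ops G Dl) (\<lambda>x y. app3 (quot_ops G Dl) d x (diag_class A \<alpha> Dl) y) TT (quot_ops F \<alpha>))"
    unfolding iso_def
  proof (intro exI conjI allI impI)
    show "bij_betw hh (A // gam) ((\<alpha> // Dl) \<times> (A // \<alpha>))"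
      unfolding bij_betw_def
    proof (intro conjI)
      show "inj_on hh (A // gam)"
      proof (rule inj_onI)
        fix X Y assume X: "X \<in> A // gam" and Y: "Y \<in> A // gam" and e: "hh X = hh Y"
        have "(sel X, sel Y) \<in> gam"
          by (rule HH_inj[OF sel_quot(2)[OF gcon X] sel_quot(2)[OF gcon Y] e[unfolded hh_def]])
        then have c: "gam``{sel X} = gam``{sel Y}" by (rule con_class[OF gcon])
        have "X = gam``{sel X}" by (rule sel_quot(3)[OF gcon X])
        also have "\<dots> = gam``{sel Y}" by (rule c)
        also have "\<dots> = Y" by (rule sel_quot(3)[OF gcon Y, symmetric])
        finally show "X = Y" .
      qed
      show "hh ` (A // gam) = (\<alpha> // Dl) \<times> (A // \<alpha>)"
      proof
        show "hh ` (A // gam) \<subseteq> (\<alpha> // Dl) \<times> (A // \<alpha>)"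
        proof (rule image_subsetI)
          fix X assume X: "X \<in> A // gam"
          show "hh X \<in> (\<alpha> // Dl) \<times> (A // \<alpha>)" unfolding hh_def by (rule HH_in[OF sel_quot(2)[OF gcon X]])
        qed
        show "(\<alpha> // Dl) \<times> (A // \<alpha>) \<subseteq> hh ` (A // gam)"
        proof
          fix P assume "P \<in> (\<alpha> // Dl) \<times> (A // \<alpha>)"
          then obtain x where x: "x \<in> A" "HH x = P" using HH_surj by blast
          have hx: "hh (gam``{x}) = P" using hh_class[OF x(1)] x(2) by simp
          show "P \<in> hh ` (A // gam)" by (rule image_eqI[where f=hh and x="gam``{x}", OF hx[symmetric] quotientI[OF x(1)]])
        qed
      qed
    qed
    fix f xs assume h: "length xs = ar f \<and> set xs \<subseteq> A // gam"
    define ys where "ys = map sel xs"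
    have ysA: "set ys \<subseteq> A" unfolding ys_def using h sel_quot(2)[OF gcon] by auto
    have ly: "length ys = ar f" unfolding ys_def using h by simp
    have xs: "xs = map (\<lambda>y. gam``{y}) ys"
    proof (rule nth_equalityI)
      show "length xs = length (map (\<lambda>y. gam``{y}) ys)" unfolding ys_def by simp
      fix i assume "i < length xs"
      then have "xs!i \<in> A // gam" using h nth_mem by blast
      then have e1: "xs!i = gam``{sel (xs!i)}" by (rule sel_quot(3)[OF gcon])
      have e2: "map (\<lambda>y. gam``{y}) ys ! i = gam``{sel (xs!i)}" unfolding ys_def using \<open>i < length xs\<close> by simp
      show "xs!i = map (\<lambda>y. gam``{y}) ys ! i" by (rule trans[OF e1 e2[symmetric]])
    qed
    have lhs: "hh (quot_ops F gam f xs) = HH (F f ys)"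
      unfolding xs quot_ops_classes[OF gcon ly ysA] using hh_class alg_op[OF Aalg ly ysA] by simp
    have mh: "map hh xs = map HH ys" unfolding xs using hh_class ysA by auto
    let ?qs = "map (\<lambda>y. \<alpha>``{y}) ys"
    let ?c = "F f (map sel ?qs)"
    let ?w = "sel (\<alpha>``{F f ys})"
    have fys: "F f ys \<in> A" using alg_op[OF Aalg ly ysA] .
    have qs: "quot_ops F \<alpha> f ?qs = \<alpha>``{F f ys}" using quot_ops_classes[OF acon ly ysA] .
    let ?ps = "map (\<lambda>y. (y, sel (\<alpha>``{y}))) ys"
    have ps: "set ?ps \<subseteq> \<alpha>" using sel_class[OF acon] ysA by auto
    have mf: "map fst (map HH ys) = map (\<lambda>p. Dl``{p}) ?ps" unfolding HH_def by simp
    have fb: "quot_ops G Dl f (map fst (map HH ys)) = Dl``{G f ?ps}"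
      unfolding mf by (rule quot_ops_classes[OF Dcon _ ps]) (simp add: ly)
    have Gps: "G f ?ps = (F f ys, ?c)" by (simp add: pair_ops_def comp_def)
    have msnd: "map snd (map HH ys) = ?qs" unfolding HH_def by simp
    have yc: "(F f ys, ?c) \<in> \<alpha>" using Gps Palg ps ly unfolding is_alg_def by (metis length_map)
    have cA: "?c \<in> A" using yc ain by blast
    have wA: "(F f ys, ?w) \<in> \<alpha>" "?w \<in> A" using sel_class[OF acon fys] ain by blast+
    have cw: "(?c, ?w) \<in> \<alpha>" using yc wA asym atrans by blast
    have TTq: "TT f ?qs = Dl``{(?c, ?w)}" unfolding TT_def qs ..
    have pl: "app3 (quot_ops G Dl) d (Dl``{(F f ys, ?c)}) (diag_class A \<alpha> Dl) (Dl``{(?c, ?w)})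
        = Dl``{(app3 F d (F f ys) ?c ?c, ?w)}"
      unfolding zero_eq[OF cA] app3_quot[OF Palg Dcon wf_d yc arefl[OF cA] cw] app3_pair
      using d_idem cA wA by simp
    have "(app3 F d (F f ys) ?c ?c, F f ys) \<in> gam" using d_gam[OF yc] .
    moreover have "(app3 F d (F f ys) ?c ?c, ?w) \<in> \<alpha>"
    proof -
      have "(app3 F d (F f ys) ?c ?c, app3 F d ?c ?c ?c) \<in> \<alpha>"
        by (rule app3_con[OF acon wf_d yc arefl[OF cA] arefl[OF cA]])
      then have "(app3 F d (F f ys) ?c ?c, ?c) \<in> \<alpha>" by (simp only: d_idem[OF cA cA])
      then show ?thesis using asym[OF yc] wA(1) atrans by blast
    qed
    ultimately have "((app3 F d (F f ys) ?c ?c, ?w), (F f ys, ?w)) \<in> Dl" using W by blast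
    then have pl2: "Dl``{(app3 F d (F f ys) ?c ?c, ?w)} = Dl``{(F f ys, ?w)}" using con_class[OF Dcon] by blast
    show "hh (quot_ops F gam f xs) = tensor_ops (quot_ops G Dl) (\<lambda>x y. app3 (quot_ops G Dl) d x (diag_class A \<alpha> Dl) y) TT (quot_ops F \<alpha>) f (map hh xs)"
      unfolding lhs mh tensor_ops_def fb Gps msnd TTq pl pl2 qs HH_def ..
  qed
qed

end

theorem theorem2p6:
  fixes ar :: "'f \<Rightarrow> nat"
    and Eqs :: "(('f, nat) trm \<times> ('f, nat) trm) set"
    and d :: "('f, nat) trm"
    and A :: "'a set" and F :: "'f \<Rightarrow> 'a list \<Rightarrow> 'a"
    and \<alpha> :: "'a rel"
  assumes wf_Eqs: "\<forall>(s, t) \<in> Eqs. wf_trm ar s \<and> wf_trm ar t"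
    and cm: "cm_at ar Eqs TYPE('a)" "cm_at ar Eqs TYPE('a \<times> 'a)"
            "cm_at ar Eqs TYPE(('f, nat) trm set)"
    and wf_d: "wf_trm ar d"
    and dt: "diff_term_at ar Eqs d TYPE('a)" "diff_term_at ar Eqs d TYPE('a \<times> 'a)"
            "diff_term_at ar Eqs d TYPE(('f, nat) trm set)"
    and A: "is_model ar Eqs A F"
    and \<alpha>: "is_con ar A F \<alpha>"
  shows "let \<Delta> = Delta1 ar A F \<alpha>;
             FB = quot_ops (pair_ops F) \<Delta>;
             zero = diag_class A \<alpha> \<Delta>;
             pl = (\<lambda>x y. app3 FB d x zero y);
             \<gamma> = commutator ar A F \<alpha> (A \<times> A)
         in \<exists>T :: 'f \<Rightarrow> 'a set list \<Rightarrow> ('a \<times> 'a) set.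
              (\<forall>f qs. length qs = ar f \<and> set qs \<subseteq> A // \<alpha> \<longrightarrow> T f qs \<in> \<alpha> // \<Delta>) \<and>
              iso ar (A // \<gamma>) (quot_ops F \<gamma>)
                     ((\<alpha> // \<Delta>) \<times> (A // \<alpha>)) (tensor_ops FB pl T (quot_ops F \<alpha>))"
proof -
  interpret setting ar Eqs d A F \<alpha>
    using cm(2) wf_d dt(1) A \<alpha> by unfold_locales
  show ?thesis unfolding Let_def by (rule main)
qed

end
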